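(* Let $(u_k)_{k\in\mathbb N}$ be a sequence generated by the proximal-gradient algorithm (with parameter $\eta>0$ and starting point $u_0\in U_{ad}\cap\mathrm{BV}(0,T)$), and assume that $\nabla F$ is Lipschitz continuous from $L^2(0,T)$ to $L^2(0,T)$ with modulus $L$. Then: (1) $(u_k)$ and $(\nabla F(u_k))$ are bounded in $L^2(0,T)$; (2) the sequence $(F(u_k)+G(u_k))_k$ is nonincreasing and convergent; (3) $\|u_{k+1}-u_k\|_{L^2(0,T)}\to0$; (4) $(u_k)$ converges weakly-$\star$ in $\mathrm{BV}(0,T)$ (in particular strongly in $L^1(0,T)$) to some $\bar u\in U_{ad}$.
   Context: $T>0$, $\beta>0$; $\nu_1<\dots<\nu_d$ are integers. $\mathrm{TV}(u):=\sup\{\int_0^T u\varphi'\,dt : \varphi\in C_c^1(0,T),\ \|\varphi\|_\infty\le 1\}$, $\mathrm{BV}(0,T)=\{u\in L^1(0,T):\mathrm{TV}(u)<\infty\}$ with norm $\|u\|_{L^1}+\mathrm{TV}(u)$; weak-$\star$ convergence in $\mathrm{BV}(0,T)$ refers to $\mathrm{BV}(0,T)$ as a dual of a separable Banach space (equivalently: $L^1$-convergence plus boundedness in $\mathrm{BV}$). $U_{ad}:=\{u\in L^1(0,T): u(t)\in\{\nu_1,\dots,\nu_d\}\text{ a.e.}\}$. $F:L^1(0,T)\to\mathbb R$ is bounded from below and Gâteaux differentiable on $L^2(0,T)$ with gradient $\nabla F(u)\in L^2(0,T)$. $G:L^2(0,T)\to\mathbb R\cup\{\infty\}$, $G(u):=\beta\mathrm{TV}(u)+\delta_{U_{ad}}(u)$,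 where $\delta_{U_{ad}}(u)=0$ if $u\in U_{ad}$ and $\infty$ otherwise. Proximal-gradient algorithm: given $u_0$ and $\eta>0$, for $k=0,1,2,\dots$ choose $\tau_k>0$ and a solution $u_{k+1}$ of $\min_{u\in L^2(0,T)} F(u_k)+(\nabla F(u_k),u-u_k)_{L^2}+\frac{\tau_k}2\|u-u_k\|_{L^2}^2+G(u)$ such that $\eta\|u_{k+1}-u_k\|_{L^2}^2\le F(u_k)+\beta\mathrm{TV}(u_k)-(F(u_{k+1})+\beta\mathrm{TV}(u_{k+1}))$; a sequence is generated by the algorithm if such choices are made at every step. *)

theory Defs
  imports "HOL-Analysis.Analysis"
begin

text \<open>Functions on (0,T) are represented by functions real => real; the measure
  space is Lebesgue measure restricted to the open interval (0,T).\<close>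

abbreviation MT :: "real \<Rightarrow> real measure" where
  "MT T \<equiv> lebesgue_on {0<..<T}"

definition inL1 :: "real \<Rightarrow> (real \<Rightarrow> real) \<Rightarrow> bool" where
  "inL1 T u \<longleftrightarrow> u \<in> borel_measurable (MT T) \<and> integrable (MT T) u"

definition inL2 :: "real \<Rightarrow> (real \<Rightarrow> real) \<Rightarrow> bool" where
  "inL2 T u \<longleftrightarrow> u \<in> borel_measurable (MT T) \<and> integrable (MT T) (\<lambda>t. (u t)\<^sup>2)"

definition L2_inner :: "real \<Rightarrow> (real \<Rightarrow> real) \<Rightarrow> (real \<Rightarrow> real) \<Rightarrow> real" where
  "L2_inner T u v = (\<integral>t. u t * v t \<partial>MT T)"

definition L2_norm :: "real \<Rightarrow> (real \<Rightarrow> real) \<Rightarrow> real" where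
  "L2_norm T u = sqrt (\<integral>t. (u t)\<^sup>2 \<partial>MT T)"

definition L1_norm :: "real \<Rightarrow> (real \<Rightarrow> real) \<Rightarrow> real" where
  "L1_norm T u = (\<integral>t. \<bar>u t\<bar> \<partial>MT T)"

definition test_fun :: "real \<Rightarrow> (real \<Rightarrow> real) \<Rightarrow> bool" where
  "test_fun T \<phi> \<longleftrightarrow> (\<forall>x. \<phi> differentiable at x) \<and> continuous_on UNIV (deriv \<phi>)
     \<and> (\<exists>a b. 0 < a \<and> a \<le> b \<and> b < T \<and> (\<forall>x. x \<notin> {a..b} \<longrightarrow> \<phi> x = 0))
     \<and> (\<forall>x. \<bar>\<phi> x\<bar> \<le> 1)"

definition TV :: "real \<Rightarrow> (real \<Rightarrow> real) \<Rightarrow> ereal" where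
  "TV T u = (SUP \<phi>\<in>{\<phi>. test_fun T \<phi>}. ereal (\<integral>t. u t * deriv \<phi> t \<partial>MT T))"

definition inBV :: "real \<Rightarrow> (real \<Rightarrow> real) \<Rightarrow> bool" where
  "inBV T u \<longleftrightarrow> inL1 T u \<and> TV T u < \<infinity>"

definition Uad :: "real \<Rightarrow> int set \<Rightarrow> (real \<Rightarrow> real) \<Rightarrow> bool" where
  "Uad T V u \<longleftrightarrow> inL1 T u \<and> (AE t in MT T. u t \<in> real_of_int ` V)"

definition Gfun :: "real \<Rightarrow> real \<Rightarrow> int set \<Rightarrow> (real \<Rightarrow> real) \<Rightarrow> ereal" where
  "Gfun T \<beta> V u = ereal \<beta> * TV T u + (if Uad T V u then 0 else \<infinity>)"

definition prox_grad_seq ::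
  "real \<Rightarrow> real \<Rightarrow> int set \<Rightarrow> ((real \<Rightarrow> real) \<Rightarrow> real) \<Rightarrow> ((real \<Rightarrow> real) \<Rightarrow> (real \<Rightarrow> real))
   \<Rightarrow> real \<Rightarrow> (nat \<Rightarrow> real \<Rightarrow> real) \<Rightarrow> bool" where
  "prox_grad_seq T \<beta> V F gradF \<eta> u \<longleftrightarrow>
     (\<forall>k. \<exists>\<tau>>0. inL2 T (u (Suc k)) \<and>
        (\<forall>v. inL2 T v \<longrightarrow>
           ereal (F (u k) + L2_inner T (gradF (u k)) (\<lambda>t. u (Suc k) t - u k t)
                  + \<tau> / 2 * (L2_norm T (\<lambda>t. u (Suc k) t - u k t))\<^sup>2) + Gfun T \<beta> V (u (Suc k))
           \<le> ereal (F (u k) + L2_inner T (gradF (u k)) (\<lambda>t. v t - u k t)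
                  + \<tau> / 2 * (L2_norm T (\<lambda>t. v t - u k t))\<^sup>2) + Gfun T \<beta> V v) \<and>
        ereal (F (u (Suc k))) + ereal \<beta> * TV T (u (Suc k))
          + ereal (\<eta> * (L2_norm T (\<lambda>t. u (Suc k) t - u k t))\<^sup>2)
        \<le> ereal (F (u k)) + ereal \<beta> * TV T (u k))"

end

theory Submission imports Defs begin

lemma fmT: "finite_measure (MT T)"
  by (rule finite_measure_lebesgue_on[OF lmeasurable_interval(2)])

lemma bdd_integrable:
  fixes f :: "real \<Rightarrow> real"
  assumes "f \<in> borel_measurable (MT T)" "AE t in MT T. \<bar>f t\<bar> \<le> B"
  shows "integrable (MT T) f"
proof -
  have "AE t in MT T. norm (f t) \<le> B" using assms(2) by eventually_elim simp
  then show ?thesis by (rule finite_measure.integrable_const_bound[OF fmT _ assms(1)])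
qed

lemma test_zero: "T > 0 \<Longrightarrow> test_fun T (\<lambda>_. 0)"
  unfolding test_fun_def
  by (auto intro!: exI[of _ "T/2"])

lemma TV_nonneg: "T > 0 \<Longrightarrow> 0 \<le> TV T u"
  unfolding TV_def
proof -
  assume "T > 0"
  have "ereal (\<integral>t. u t * deriv (\<lambda>_. 0::real) t \<partial>MT T) \<le> (SUP \<phi>\<in>{\<phi>. test_fun T \<phi>}. ereal (\<integral>t. u t * deriv \<phi> t \<partial>MT T))"
    by (rule SUP_upper) (use test_zero[OF \<open>T>0\<close>] in auto)
  then show "0 \<le> (SUP \<phi>\<in>{\<phi>. test_fun T \<phi>}. ereal (\<integral>t. u t * deriv \<phi> t \<partial>MT T))" by (simp add: zero_ereal_def)
qed

definition MV :: "int set \<Rightarrow> real" where "MV V = Max (abs ` real_of_int ` V)"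

lemma MV_ge: "finite V \<Longrightarrow> x \<in> real_of_int ` V \<Longrightarrow> \<bar>x\<bar> \<le> MV V"
  unfolding MV_def by (rule Max_ge) auto

lemma Uad_bound: "finite V \<Longrightarrow> Uad T V u \<Longrightarrow> AE t in MT T. \<bar>u t\<bar> \<le> MV V"
proof -
  assume f: "finite V" and "Uad T V u"
  then have "AE t in MT T. u t \<in> real_of_int ` V" by (simp add: Uad_def)
  then show ?thesis by eventually_elim (rule MV_ge[OF f])
qed

lemma Uad_int: "Uad T V u \<Longrightarrow> AE t in MT T. u t \<in> \<int>"
  unfolding Uad_def apply (elim conjE) apply (erule AE_mp) by (auto intro!: AE_I2)

lemma sq_le: "\<bar>x::real\<bar> \<le> B \<Longrightarrow> \<bar>x^2\<bar> \<le> B^2"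
proof -
  assume h: "\<bar>x\<bar> \<le> B"
  have "\<bar>x\<bar>^2 \<le> B^2" by (rule power_mono[OF h abs_ge_zero])
  then show ?thesis by (simp only: abs_power2 power2_abs)
qed

lemma Uad_L2:
  assumes a: "finite V" "Uad T V u"
  shows "inL2 T u"
proof -
  have m: "u \<in> borel_measurable (MT T)" using a(2) unfolding Uad_def inL1_def by blast
  have m2: "(\<lambda>t. (u t)\<^sup>2) \<in> borel_measurable (MT T)" using m by measurable
  have b: "AE t in MT T. \<bar>(u t)^2\<bar> \<le> (MV V)^2"
    using Uad_bound[OF a] by eventually_elim (rule sq_le)
  have "integrable (MT T) (\<lambda>t. (u t)\<^sup>2)"
    by (rule bdd_integrable[OF m2 b])
  then show ?thesis using m unfolding inL2_def by blast
qed


definition mu :: "real \<Rightarrow> real" where "mu T = measure (MT T) {0<..<T}"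

lemma sq_int_bound:
  fixes f :: "real \<Rightarrow> real"
  assumes "AE t in MT T. \<bar>f t\<bar> \<le> B"
  shows "(\<integral>t. (f t)^2 \<partial>MT T) \<le> B^2 * mu T"
proof -
  have "(\<integral>t. (f t)^2 \<partial>MT T) \<le> (\<integral>t. B^2 \<partial>MT T)"
  proof (rule integral_mono_AE')
    show "integrable (MT T) (\<lambda>t. B^2)" by (rule finite_measure.integrable_const[OF fmT])
    show "AE x in MT T. (f x)\<^sup>2 \<le> B\<^sup>2" using assms
      by eventually_elim (use sq_le in force)
    show "AE x in MT T. 0 \<le> B\<^sup>2" by (rule AE_I2) simp
  qed
  also have "\<dots> = B^2 * mu T" unfolding mu_def
    by (simp only: lebesgue_integral_const space_lebesgue_on real_scaleR_def mult.commute)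
  finally show ?thesis .
qed

lemma L2_norm_bound:
  fixes f :: "real \<Rightarrow> real"
  assumes "AE t in MT T. \<bar>f t\<bar> \<le> B"
  shows "L2_norm T f \<le> sqrt (B^2 * mu T)"
  unfolding L2_norm_def using sq_int_bound[OF assms] by (rule real_sqrt_le_mono)

lemma int_abs_le_sq: "(x::real) \<in> \<int> \<Longrightarrow> \<bar>x\<bar> \<le> x^2"
proof -
  assume "x \<in> \<int>"
  then obtain n :: int where n: "x = of_int n" by (auto elim: Ints_cases)
  have "\<bar>n\<bar> \<le> n^2"
  proof (cases "n = 0")
    case False
    then have "1 \<le> \<bar>n\<bar>" by linarith
    then have "\<bar>n\<bar> * 1 \<le> \<bar>n\<bar> * \<bar>n\<bar>" by (intro mult_left_mono) auto
    then show ?thesis by (simp add: power2_eq_square abs_mult[symmetric])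
  qed simp
  then have "real_of_int \<bar>n\<bar> \<le> real_of_int (n^2)" by (simp only: of_int_le_iff)
  then show ?thesis using n by simp
qed

lemma sq_diff_le: "((a::real) - b)^2 \<le> 2 * a^2 + 2 * b^2"
proof -
  have "0 \<le> (a + b)^2" by simp
  then show ?thesis by (simp add: power2_eq_square algebra_simps)
qed


lemma ereal_aux1: "ereal A + X \<le> ereal B + ereal c \<Longrightarrow> X < \<infinity>"
  by (cases X) auto

lemma ereal_aux2: "0 \<le> (Y::ereal) \<Longrightarrow> Y + \<infinity> = \<infinity>"
  by (cases Y) auto

lemma ereal_aux3: "\<beta> > 0 \<Longrightarrow> ereal A + ereal \<beta> * \<infinity> + ereal C \<le> ereal B + ereal c \<Longrightarrow> False"
  by simp

lemma TV_real: "T > 0 \<Longrightarrow> TV T w < \<infinity> \<Longrightarrow> TV T w = ereal (real_of_ereal (TV T w)) \<and> 0 \<le> real_of_ereal (TV T w)"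
  using TV_nonneg[of T w] by (cases "TV T w") auto


lemma L2_norm_nonneg: "0 \<le> L2_norm T f"
  unfolding L2_norm_def by (rule real_sqrt_ge_zero, rule integral_nonneg_AE, rule AE_I2, simp)

lemma L2_norm_sq: "(L2_norm T f)^2 = (\<integral>t. (f t)^2 \<partial>MT T)"
proof -
  have "0 \<le> (\<integral>t. (f t)^2 \<partial>MT T)" by (rule integral_nonneg_AE, rule AE_I2, simp)
  then show ?thesis unfolding L2_norm_def by simp
qed

lemma sq_le2: "(a::real)^2 \<le> 2 * (a - b)^2 + 2 * b^2"
proof -
  have "0 \<le> (a - 2*b)^2" by simp
  then show ?thesis by (simp add: power2_eq_square algebra_simps)
qed

lemma L2_diff_int:
  assumes f: "inL2 T f" and g: "inL2 T g"
  shows "integrable (MT T) (\<lambda>t. (f t - g t)^2)"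
proof (rule Bochner_Integration.integrable_bound[where f="\<lambda>t. 2 * (f t)^2 + 2 * (g t)^2"])
  have "integrable (MT T) (\<lambda>t. (f t)^2)" "integrable (MT T) (\<lambda>t. (g t)^2)"
    using f g unfolding inL2_def by auto
  then show "integrable (MT T) (\<lambda>t. 2 * (f t)^2 + 2 * (g t)^2)"
    by (rule Bochner_Integration.integrable_add[OF Bochner_Integration.integrable_mult_right Bochner_Integration.integrable_mult_right])
  have "f \<in> borel_measurable (MT T)" "g \<in> borel_measurable (MT T)" using f g unfolding inL2_def by auto
  then show "(\<lambda>t. (f t - g t)^2) \<in> borel_measurable (MT T)" by measurable
  show "AE x in MT T. norm ((f x - g x)^2) \<le> norm (2 * (f x)^2 + 2 * (g x)^2)"
    by (rule AE_I2) (use sq_diff_le in simp)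
qed

lemma L2_tri:
  assumes f: "inL2 T f" and g: "inL2 T g"
  shows "(\<integral>t. (f t)^2 \<partial>MT T) \<le> 2 * (L2_norm T (\<lambda>t. f t - g t))^2 + 2 * (\<integral>t. (g t)^2 \<partial>MT T)"
proof -
  have i1: "integrable (MT T) (\<lambda>t. (f t - g t)^2)" by (rule L2_diff_int[OF f g])
  have i2: "integrable (MT T) (\<lambda>t. (g t)^2)" using g unfolding inL2_def by auto
  have "(\<integral>t. (f t)^2 \<partial>MT T) \<le> (\<integral>t. 2 * (f t - g t)^2 + 2 * (g t)^2 \<partial>MT T)"
  proof (rule integral_mono_AE')
    show "integrable (MT T) (\<lambda>t. 2 * (f t - g t)^2 + 2 * (g t)^2)"
      using i1 i2 by (rule Bochner_Integration.integrable_add[OF Bochner_Integration.integrable_mult_right Bochner_Integration.integrable_mult_right])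
    show "AE x in MT T. (f x)\<^sup>2 \<le> 2 * (f x - g x)\<^sup>2 + 2 * (g x)\<^sup>2" by (rule AE_I2) (rule sq_le2)
    show "AE x in MT T. 0 \<le> 2 * (f x - g x)\<^sup>2 + 2 * (g x)\<^sup>2" by (rule AE_I2) simp
  qed
  also have "\<dots> = 2 * (\<integral>t. (f t - g t)^2 \<partial>MT T) + 2 * (\<integral>t. (g t)^2 \<partial>MT T)"
    using i1 i2 apply (subst Bochner_Integration.integral_add)
      apply (rule Bochner_Integration.integrable_mult_right; assumption)+
    apply (subst Bochner_Integration.integral_mult_right; assumption?)+
    by (rule refl)
  also have "\<dots> = 2 * (L2_norm T (\<lambda>t. f t - g t))^2 + 2 * (\<integral>t. (g t)^2 \<partial>MT T)"
    by (simp only: L2_norm_sq)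
  finally show ?thesis .
qed

lemma MV_nn: "finite V \<Longrightarrow> V \<noteq> {} \<Longrightarrow> 0 \<le> MV V"
proof -
  assume f: "finite V" and "V \<noteq> {}"
  then obtain x where "x \<in> V" by blast
  then have "\<bar>real_of_int x\<bar> \<le> MV V" by (intro MV_ge[OF f]) auto
  then show ?thesis by linarith
qed


lemma L1_le_sq:
  assumes V: "finite V" and v: "Uad T V v" and w: "Uad T V w"
  shows "(\<integral>t. \<bar>w t - v t\<bar> \<partial>MT T) \<le> (\<integral>t. (w t - v t)^2 \<partial>MT T)"
proof (rule integral_mono_AE')
  show "integrable (MT T) (\<lambda>t. (w t - v t)^2)" by (rule L2_diff_int[OF Uad_L2[OF V w] Uad_L2[OF V v]])
  show "AE x in MT T. \<bar>w x - v x\<bar> \<le> (w x - v x)\<^sup>2"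
    using Uad_int[OF v] Uad_int[OF w] by eventually_elim (rule int_abs_le_sq, rule Ints_diff)
  show "AE x in MT T. 0 \<le> (w x - v x)\<^sup>2" by (rule AE_I2) simp
qed

lemma ae_conv:
  fixes u :: "nat \<Rightarrow> real \<Rightarrow> real" and d :: "nat \<Rightarrow> real"
  assumes meas: "\<And>k. u k \<in> borel_measurable (MT T)"
    and int: "\<And>k. integrable (MT T) (\<lambda>t. \<bar>u (Suc k) t - u k t\<bar>)"
    and bnd: "\<And>k. (\<integral>t. \<bar>u (Suc k) t - u k t\<bar> \<partial>MT T) \<le> d k" and sd: "summable d"
  shows "AE t in MT T. convergent (\<lambda>k. u k t)"
proof -
  define a where "a k = (\<integral>t. \<bar>u (Suc k) t - u k t\<bar> \<partial>MT T)" for k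
  have a_nn: "0 \<le> a k" for k unfolding a_def by (rule integral_nonneg_AE) (rule AE_I2, simp)
  have sa: "summable a"
    by (rule summable_comparison_test'[OF sd]) (use a_nn bnd in \<open>auto simp: a_def\<close>)
  have mD: "(\<lambda>t. ennreal \<bar>u (Suc k) t - u k t\<bar>) \<in> borel_measurable (MT T)" for k
    using meas[of k] meas[of "Suc k"] by measurable
  have "(\<integral>\<^sup>+ t. (\<Sum>k. ennreal \<bar>u (Suc k) t - u k t\<bar>) \<partial>MT T)
        = (\<Sum>k. (\<integral>\<^sup>+ t. ennreal \<bar>u (Suc k) t - u k t\<bar> \<partial>MT T))"
    by (rule nn_integral_suminf[OF mD])
  also have "\<dots> = (\<Sum>k. ennreal (a k))"
  proof (rule suminf_cong)
    fix k
    show "(\<integral>\<^sup>+ t. ennreal \<bar>u (Suc k) t - u k t\<bar> \<partial>MT T) = ennreal (a k)"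
      unfolding a_def by (rule nn_integral_eq_integral[OF int]) (rule AE_I2, simp)
  qed
  also have "\<dots> = ennreal (\<Sum>k. a k)" by (rule suminf_ennreal2[OF a_nn sa])
  finally have fin: "(\<integral>\<^sup>+ t. (\<Sum>k. ennreal \<bar>u (Suc k) t - u k t\<bar>) \<partial>MT T) \<noteq> \<infinity>" by simp
  have mS: "(\<lambda>t. \<Sum>k. ennreal \<bar>u (Suc k) t - u k t\<bar>) \<in> borel_measurable (MT T)"
    using mD by measurable
  have "AE t in MT T. (\<Sum>k. ennreal \<bar>u (Suc k) t - u k t\<bar>) \<noteq> \<infinity>"
    by (rule nn_integral_PInf_AE[OF mS fin])
  then show ?thesis
  proof eventually_elim
    fix t assume "(\<Sum>k. ennreal \<bar>u (Suc k) t - u k t\<bar>) \<noteq> \<infinity>"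
    then have "summable (\<lambda>k. \<bar>u (Suc k) t - u k t\<bar>)"
      by (intro summable_suminf_not_top) auto
    then have "summable (\<lambda>k. u (Suc k) t - u k t)" by (rule summable_rabs_cancel)
    then have "(\<lambda>n. \<Sum>k<n. u (Suc k) t - u k t) \<longlonglongrightarrow> (\<Sum>k. u (Suc k) t - u k t)"
      by (rule summable_LIMSEQ)
    then have "(\<lambda>n. u n t - u 0 t) \<longlonglongrightarrow> (\<Sum>k. u (Suc k) t - u k t)"
      by (simp add: sum_lessThan_telescope[of "\<lambda>k. u k t"])
    then have "(\<lambda>n. (u n t - u 0 t) + u 0 t) \<longlonglongrightarrow> (\<Sum>k. u (Suc k) t - u k t) + u 0 t"
      by (intro tendsto_add tendsto_const)
    then show "convergent (\<lambda>k. u k t)" unfolding convergent_def by auto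
  qed
qed

lemma ae_lim:
  fixes u :: "nat \<Rightarrow> real \<Rightarrow> real"
  assumes meas: "\<And>k. u k \<in> borel_measurable (MT T)"
    and conv: "AE t in MT T. convergent (\<lambda>k. u k t)"
  shows "\<exists>ub. ub \<in> borel_measurable (MT T) \<and> (AE t in MT T. (\<lambda>k. u k t) \<longlonglongrightarrow> ub t)"
proof (intro exI conjI)
  show "(\<lambda>t. real_of_ereal (limsup (\<lambda>k. ereal (u k t)))) \<in> borel_measurable (MT T)"
    using meas by measurable
  show "AE t in MT T. (\<lambda>k. u k t) \<longlonglongrightarrow> real_of_ereal (limsup (\<lambda>k. ereal (u k t)))"
    using conv
  proof eventually_elim
    fix t assume "convergent (\<lambda>k. u k t)"
    then obtain L where L: "(\<lambda>k. u k t) \<longlonglongrightarrow> L" unfolding convergent_def by blast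
    then have "(\<lambda>k. ereal (u k t)) \<longlonglongrightarrow> ereal L" by simp
    then have "limsup (\<lambda>k. ereal (u k t)) = ereal L"
      by (rule lim_imp_Limsup[OF trivial_limit_sequentially])
    then show "(\<lambda>k. u k t) \<longlonglongrightarrow> real_of_ereal (limsup (\<lambda>k. ereal (u k t)))" using L by simp
  qed
qed

theorem theorem4p1:
  fixes T \<beta> \<eta> L :: real and V :: "int set"
    and F :: "(real \<Rightarrow> real) \<Rightarrow> real" and gradF :: "(real \<Rightarrow> real) \<Rightarrow> (real \<Rightarrow> real)"
    and u :: "nat \<Rightarrow> real \<Rightarrow> real"
  assumes T_pos: "T > 0" and beta_pos: "\<beta> > 0" and eta_pos: "\<eta> > 0"
    and V_fin: "finite V" and V_ne: "V \<noteq> {}"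
    and F_ae: "\<And>v w. inL1 T v \<Longrightarrow> inL1 T w \<Longrightarrow> (AE t in MT T. v t = w t) \<Longrightarrow> F v = F w"
    and F_bdd: "\<exists>m. \<forall>v. inL1 T v \<longrightarrow> m \<le> F v"
    and grad_L2: "\<And>v. inL2 T v \<Longrightarrow> inL2 T (gradF v)"
    and gateaux: "\<And>v h. inL2 T v \<Longrightarrow> inL2 T h \<Longrightarrow>
        ((\<lambda>s. F (\<lambda>t. v t + s * h t)) has_real_derivative L2_inner T (gradF v) h) (at 0)"
    and lipschitz: "\<And>v w. inL2 T v \<Longrightarrow> inL2 T w \<Longrightarrow>
        L2_norm T (\<lambda>t. gradF v t - gradF w t) \<le> L * L2_norm T (\<lambda>t. v t - w t)"
    and u0: "Uad T V (u 0)" "inBV T (u 0)"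
    and alg: "prox_grad_seq T \<beta> V F gradF \<eta> u"
  shows "(\<exists>C. \<forall>k. L2_norm T (u k) \<le> C \<and> L2_norm T (gradF (u k)) \<le> C)
    \<and> decseq (\<lambda>k. ereal (F (u k)) + Gfun T \<beta> V (u k))
    \<and> (\<exists>c::real. (\<lambda>k. ereal (F (u k)) + Gfun T \<beta> V (u k)) \<longlonglongrightarrow> ereal c)
    \<and> (\<lambda>k. L2_norm T (\<lambda>t. u (Suc k) t - u k t)) \<longlonglongrightarrow> 0
    \<and> (\<exists>ubar. Uad T V ubar \<and> inBV T ubar
         \<and> (\<lambda>k. L1_norm T (\<lambda>t. u k t - ubar t)) \<longlonglongrightarrow> 0
         \<and> (\<exists>C. \<forall>k. TV T (u k) \<le> ereal C))"
  proof -
  obtain m where m: "\<And>v. inL1 T v \<Longrightarrow> m \<le> F v" using F_bdd by blast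
  have inv: "Uad T V (u k) \<and> TV T (u k) < \<infinity>" for k
  proof (induction k)
    case 0
    then show ?case using u0 unfolding inBV_def by blast
  next
    case (Suc k)
    from alg obtain \<tau> where pr: "\<forall>v. inL2 T v \<longrightarrow>
           ereal (F (u k) + L2_inner T (gradF (u k)) (\<lambda>t. u (Suc k) t - u k t)
                  + \<tau> / 2 * (L2_norm T (\<lambda>t. u (Suc k) t - u k t))\<^sup>2) + Gfun T \<beta> V (u (Suc k))
           \<le> ereal (F (u k) + L2_inner T (gradF (u k)) (\<lambda>t. v t - u k t)
                  + \<tau> / 2 * (L2_norm T (\<lambda>t. v t - u k t))\<^sup>2) + Gfun T \<beta> V v" and
        ds: "ereal (F (u (Suc k))) + ereal \<beta> * TV T (u (Suc k))
          + ereal (\<eta> * (L2_norm T (\<lambda>t. u (Suc k) t - u k t))\<^sup>2)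
        \<le> ereal (F (u k)) + ereal \<beta> * TV T (u k)"
      unfolding prox_grad_seq_def by blast
    have ukL2: "inL2 T (u k)" using Uad_L2[OF V_fin] Suc.IH by blast
    obtain r where r: "TV T (u k) = ereal r" using TV_real[OF T_pos] Suc.IH by blast
    have Gk: "Gfun T \<beta> V (u k) = ereal (\<beta> * r)" using Suc.IH r by (simp add: Gfun_def)
    obtain A B where "ereal A + Gfun T \<beta> V (u (Suc k)) \<le> ereal B + Gfun T \<beta> V (u k)"
      using pr ukL2 by blast
    then have Gfin: "Gfun T \<beta> V (u (Suc k)) < \<infinity>" unfolding Gk by (rule ereal_aux1)
    have U: "Uad T V (u (Suc k))"
    proof (rule ccontr)
      assume "\<not> Uad T V (u (Suc k))"
      then have "Gfun T \<beta> V (u (Suc k)) = ereal \<beta> * TV T (u (Suc k)) + \<infinity>" by (simp add: Gfun_def)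
      also have "\<dots> = \<infinity>" using TV_nonneg[OF T_pos] beta_pos by (intro ereal_aux2) simp
      finally show False using Gfin by simp
    qed
    have "TV T (u (Suc k)) \<noteq> \<infinity>"
    proof
      assume "TV T (u (Suc k)) = \<infinity>"
      then show False using ds r ereal_aux3[OF beta_pos] by (metis times_ereal.simps(1))
    qed
    then show ?case using U by (simp add: less_top)
  qed
  have U: "Uad T V (u k)" for k using inv by blast
  define tv where "tv k = real_of_ereal (TV T (u k))" for k
  have tvb: "TV T (u k) = ereal (tv k) \<and> 0 \<le> tv k" for k
    unfolding tv_def by (rule TV_real[OF T_pos]) (use inv in blast)
  have tv: "TV T (u k) = ereal (tv k)" for k using tvb by blast
  have tv_nn: "0 \<le> tv k" for k using tvb by blast
  have L1: "inL1 T (u k)" for k using U unfolding Uad_def by blast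
  have L2: "inL2 T (u k)" for k using Uad_L2[OF V_fin U] .
  define E where "E k = F (u k) + \<beta> * tv k" for k
  define d where "d k = (\<integral>t. (u (Suc k) t - u k t)^2 \<partial>MT T)" for k
  have d_nn: "0 \<le> d k" for k unfolding d_def by (rule integral_nonneg_AE) (rule AE_I2, simp)
  have nrm: "L2_norm T (\<lambda>t. u (Suc k) t - u k t) = sqrt (d k)" for k unfolding L2_norm_def d_def ..
  have nrm2: "(L2_norm T (\<lambda>t. u (Suc k) t - u k t))^2 = d k" for k using nrm d_nn by simp
  have desc: "E (Suc k) + \<eta> * d k \<le> E k" for k
  proof -
    from alg have ds: "ereal (F (u (Suc k))) + ereal \<beta> * TV T (u (Suc k))
          + ereal (\<eta> * (L2_norm T (\<lambda>t. u (Suc k) t - u k t))\<^sup>2)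
        \<le> ereal (F (u k)) + ereal \<beta> * TV T (u k)"
      unfolding prox_grad_seq_def by blast
    then show ?thesis unfolding tv nrm2 E_def by simp
  qed
  have Em: "m \<le> E k" for k
  proof -
    have "m \<le> F (u k)" by (rule m[OF L1])
    moreover have "0 \<le> \<beta> * tv k" using beta_pos tv_nn by simp
    ultimately show ?thesis unfolding E_def by linarith
  qed
  have Edec: "E (Suc k) \<le> E k" for k
  proof -
    have "0 \<le> \<eta> * d k" using eta_pos d_nn by simp
    then show ?thesis using desc[of k] by linarith
  qed
  have decE: "decseq E" by (rule decseq_SucI) (rule Edec)
  have FG: "ereal (F (u k)) + Gfun T \<beta> V (u k) = ereal (E k)" for k
    using U[of k] by (simp add: Gfun_def E_def tv)
  have P2a: "decseq (\<lambda>k. ereal (F (u k)) + Gfun T \<beta> V (u k))"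
    unfolding FG decseq_def using decE[unfolded decseq_def] by simp
  obtain c where c: "E \<longlonglongrightarrow> c" using decseq_convergent[OF decE, of m] Em by blast
  have P2b: "\<exists>c::real. (\<lambda>k. ereal (F (u k)) + Gfun T \<beta> V (u k)) \<longlonglongrightarrow> ereal c"
    unfolding FG using c by auto
  have psum: "\<eta> * (\<Sum>j<n. d j) \<le> E 0 - E n" for n
  proof (induction n)
    case (Suc n)
    then show ?case using desc[of n] by (simp add: distrib_left)
  qed simp
  have psum2: "(\<Sum>j<n. d j) \<le> (E 0 - m) / \<eta>" for n
    using psum[of n] Em[of n] eta_pos by (simp add: pos_le_divide_eq mult.commute)
  have sd: "summable d" by (rule summableI_nonneg_bounded[OF d_nn psum2])
  have d0: "d \<longlonglongrightarrow> 0" by (rule summable_LIMSEQ_zero[OF sd])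
  have P3: "(\<lambda>k. L2_norm T (\<lambda>t. u (Suc k) t - u k t)) \<longlonglongrightarrow> 0"
    unfolding nrm using tendsto_real_sqrt[OF d0] by simp
  define C1 where "C1 = sqrt ((MV V)^2 * mu T)"
  have P1u: "L2_norm T (u k) \<le> C1" for k unfolding C1_def by (rule L2_norm_bound[OF Uad_bound[OF V_fin U]])
  define N where "N = sqrt ((2 * MV V)^2 * mu T)"
  have Nk: "L2_norm T (\<lambda>t. u k t - u 0 t) \<le> N" for k
    unfolding N_def
  proof (rule L2_norm_bound)
    show "AE t in MT T. \<bar>u k t - u 0 t\<bar> \<le> 2 * MV V"
      using Uad_bound[OF V_fin U[of k]] Uad_bound[OF V_fin U[of 0]] by eventually_elim linarith
  qed
  have gL2: "inL2 T (gradF (u k))" for k by (rule grad_L2[OF L2])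
  have lip: "L2_norm T (\<lambda>t. gradF (u k) t - gradF (u 0) t) \<le> \<bar>L\<bar> * N" for k
  proof -
    have "L2_norm T (\<lambda>t. gradF (u k) t - gradF (u 0) t) \<le> L * L2_norm T (\<lambda>t. u k t - u 0 t)"
      by (rule lipschitz[OF L2 L2])
    also have "\<dots> \<le> \<bar>L\<bar> * L2_norm T (\<lambda>t. u k t - u 0 t)"
      by (rule mult_right_mono[OF abs_ge_self L2_norm_nonneg])
    also have "\<dots> \<le> \<bar>L\<bar> * N" by (rule mult_left_mono[OF Nk abs_ge_zero])
    finally show ?thesis .
  qed
  define C2 where "C2 = sqrt (2 * (\<bar>L\<bar> * N)^2 + 2 * (\<integral>t. (gradF (u 0) t)^2 \<partial>MT T))"
  have P1g: "L2_norm T (gradF (u k)) \<le> C2" for k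
  proof -
    have "(L2_norm T (\<lambda>t. gradF (u k) t - gradF (u 0) t))^2 \<le> (\<bar>L\<bar> * N)^2"
      by (rule power_mono[OF lip L2_norm_nonneg])
    then have "(\<integral>t. (gradF (u k) t)^2 \<partial>MT T) \<le> 2 * (\<bar>L\<bar> * N)^2 + 2 * (\<integral>t. (gradF (u 0) t)^2 \<partial>MT T)"
      using L2_tri[OF gL2 gL2, of k 0] by linarith
    then show ?thesis unfolding L2_norm_def C2_def by (rule real_sqrt_le_mono)
  qed
  have P1: "\<exists>C. \<forall>k. L2_norm T (u k) \<le> C \<and> L2_norm T (gradF (u k)) \<le> C"
    using P1u P1g by (intro exI[of _ "max C1 C2"]) (auto simp: le_max_iff_disj)
  have um: "u k \<in> borel_measurable (MT T)" for k using L1 unfolding inL1_def by blast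
  have intD: "integrable (MT T) (\<lambda>t. \<bar>u (Suc k) t - u k t\<bar>)" for k
  proof -
    have "integrable (MT T) (u (Suc k))" "integrable (MT T) (u k)" using L1 unfolding inL1_def by blast+
    then show ?thesis by (intro Bochner_Integration.integrable_abs Bochner_Integration.integrable_diff)
  qed
  have bndD: "(\<integral>t. \<bar>u (Suc k) t - u k t\<bar> \<partial>MT T) \<le> d k" for k
    unfolding d_def by (rule L1_le_sq[OF V_fin U U])
  have conv: "AE t in MT T. convergent (\<lambda>k. u k t)" by (rule ae_conv[OF um intD bndD sd])
  obtain ub where ubm: "ub \<in> borel_measurable (MT T)" and ubl: "AE t in MT T. (\<lambda>k. u k t) \<longlonglongrightarrow> ub t"
    using ae_lim[OF um conv] by blast
  have "\<forall>k. AE t in MT T. u k t \<in> real_of_int ` V" using U unfolding Uad_def by blast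
  then have allV: "AE t in MT T. \<forall>k. u k t \<in> real_of_int ` V" by (rule AE_all_countable[THEN iffD2])
  have ubV: "AE t in MT T. ub t \<in> real_of_int ` V"
    using allV ubl
  proof eventually_elim
    fix t assume a: "\<forall>k. u k t \<in> real_of_int ` V" and b: "(\<lambda>k. u k t) \<longlonglongrightarrow> ub t"
    have cl: "closed (real_of_int ` V)" using V_fin by (intro finite_imp_closed) simp
    show "ub t \<in> real_of_int ` V" by (rule closed_sequentially[OF cl _ b]) (use a in blast)
  qed
  have ubB: "AE t in MT T. \<bar>ub t\<bar> \<le> MV V" using ubV by eventually_elim (rule MV_ge[OF V_fin])
  have ubL1: "inL1 T ub" unfolding inL1_def using ubm bdd_integrable[OF ubm ubB] by blast
  have ubU: "Uad T V ub" unfolding Uad_def using ubL1 ubV by blast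
  have L1c: "(\<lambda>k. L1_norm T (\<lambda>t. u k t - ub t)) \<longlonglongrightarrow> 0"
  proof -
    have "(\<lambda>k. (\<integral>t. \<bar>u k t - ub t\<bar> \<partial>MT T)) \<longlonglongrightarrow> (\<integral>t. 0 \<partial>MT T)"
    proof (rule integral_dominated_convergence[where w="\<lambda>t. 2 * MV V"])
      show "(\<lambda>t. 0::real) \<in> borel_measurable (MT T)" by (rule borel_measurable_const)
      show "(\<lambda>t. \<bar>u k t - ub t\<bar>) \<in> borel_measurable (MT T)" for k using um[of k] ubm by measurable
      show "integrable (MT T) (\<lambda>t. 2 * MV V)" by (rule finite_measure.integrable_const[OF fmT])
      show "AE t in MT T. (\<lambda>k. \<bar>u k t - ub t\<bar>) \<longlonglongrightarrow> 0" using ubl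
      proof eventually_elim
        fix t assume "(\<lambda>k. u k t) \<longlonglongrightarrow> ub t"
        then have "(\<lambda>k. u k t - ub t) \<longlonglongrightarrow> ub t - ub t" by (intro tendsto_diff tendsto_const)
        then have "(\<lambda>k. \<bar>u k t - ub t\<bar>) \<longlonglongrightarrow> \<bar>ub t - ub t\<bar>" by (rule tendsto_rabs)
        then show "(\<lambda>k. \<bar>u k t - ub t\<bar>) \<longlonglongrightarrow> 0" by simp
      qed
      show "AE t in MT T. norm \<bar>u k t - ub t\<bar> \<le> 2 * MV V" for k
        using Uad_bound[OF V_fin U[of k]] ubB by eventually_elim simp
    qed
    then show ?thesis unfolding L1_norm_def by simp
  qed
  define Ctv where "Ctv = (E 0 - m) / \<beta>"
  have tvC: "tv k \<le> Ctv" for k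
  proof -
    have "\<beta> * tv k \<le> E 0 - m" using Em[of k] m[OF L1[of k]] decseqD[OF decE, of 0 k] unfolding E_def by simp
    then show ?thesis unfolding Ctv_def using beta_pos by (simp add: pos_le_divide_eq mult.commute)
  qed
  have TVC: "\<exists>C. \<forall>k. TV T (u k) \<le> ereal C" using tvC tv by (intro exI[of _ Ctv]) simp
  have TVub: "TV T ub \<le> ereal Ctv"
    unfolding TV_def
  proof (rule SUP_least)
    fix \<phi> assume "\<phi> \<in> {\<phi>. test_fun T \<phi>}"
    then have cont: "continuous_on UNIV (deriv \<phi>)" unfolding test_fun_def by blast
    have "compact (deriv \<phi> ` {0..T})"
      by (rule compact_continuous_image[OF continuous_on_subset[OF cont] compact_Icc]) simp
    then have "bounded (deriv \<phi> ` {0..T})" by (rule compact_imp_bounded)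
    then obtain B where B0: "\<forall>y\<in>deriv \<phi> ` {0..T}. norm y \<le> B" unfolding bounded_iff by blast
    have B: "\<bar>deriv \<phi> x\<bar> \<le> B" if "x \<in> {0..T}" for x using B0 that by force
    have Bnn: "0 \<le> B" using B[of 0] T_pos by force
    have dm: "deriv \<phi> \<in> borel_measurable (MT T)"
      by (rule continuous_imp_measurable_on_sets_lebesgue[OF continuous_on_subset[OF cont subset_UNIV]])
         (rule fmeasurableD[OF lmeasurable_interval(2)])
    have sp: "AE t in MT T. t \<in> {0..T}" by (rule AE_I2) simp
    have lim: "(\<lambda>k. (\<integral>t. u k t * deriv \<phi> t \<partial>MT T)) \<longlonglongrightarrow> (\<integral>t. ub t * deriv \<phi> t \<partial>MT T)"
    proof (rule integral_dominated_convergence[where w="\<lambda>t. MV V * B"])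
      show "(\<lambda>t. ub t * deriv \<phi> t) \<in> borel_measurable (MT T)" using ubm dm by measurable
      show "(\<lambda>t. u k t * deriv \<phi> t) \<in> borel_measurable (MT T)" for k using um[of k] dm by measurable
      show "integrable (MT T) (\<lambda>t. MV V * B)" by (rule finite_measure.integrable_const[OF fmT])
      show "AE t in MT T. (\<lambda>k. u k t * deriv \<phi> t) \<longlonglongrightarrow> ub t * deriv \<phi> t" using ubl
        by eventually_elim (intro tendsto_mult tendsto_const)
      show "AE t in MT T. norm (u k t * deriv \<phi> t) \<le> MV V * B" for k
        using Uad_bound[OF V_fin U[of k]] sp
      proof eventually_elim
        fix t assume a: "\<bar>u k t\<bar> \<le> MV V" and b: "t \<in> {0..T}"
        have "\<bar>u k t\<bar> * \<bar>deriv \<phi> t\<bar> \<le> MV V * B" by (rule mult_mono[OF a B[OF b] MV_nn[OF V_fin V_ne] abs_ge_zero])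
        then show "norm (u k t * deriv \<phi> t) \<le> MV V * B" by (simp add: abs_mult)
      qed
    qed
    have each: "(\<integral>t. u k t * deriv \<phi> t \<partial>MT T) \<le> Ctv" for k
    proof -
      have "ereal (\<integral>t. u k t * deriv \<phi> t \<partial>MT T) \<le> TV T (u k)"
        unfolding TV_def by (rule SUP_upper) (use \<open>\<phi> \<in> {\<phi>. test_fun T \<phi>}\<close> in blast)
      then show ?thesis using tv[of k] tvC[of k] by simp
    qed
    have "(\<integral>t. ub t * deriv \<phi> t \<partial>MT T) \<le> Ctv"
      by (rule LIMSEQ_le_const2[OF lim]) (use each in blast)
    then show "ereal (\<integral>t. ub t * deriv \<phi> t \<partial>MT T) \<le> ereal Ctv" by simp
  qed
  have ubBV: "inBV T ub" unfolding inBV_def using ubL1 TVub by (auto simp: less_top[symmetric] dest: order.strict_trans1[of _ "ereal Ctv"])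
  show ?thesis using P1 P2a P2b P3 ubU ubBV L1c TVC by blast
qed

end
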